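(* Consider a single context with design set $\mathcal D=\mathcal P\sqcup\mathcal U$. Each design $d$ is Gaussian with mean $\mu^*_d$ and known variance $(\sigma^*_d)^2>0$, all means are distinct, and every mean in $\mathcal P$ exceeds every mean in $\mathcal U$. For $d\in\mathcal P$, $d'\in\mathcal U$ let $$G_{d,d'}(x,y)=\frac{(\mu^*_d-\mu^*_{d'})^2}{(\sigma^*_d)^2/x+(\sigma^*_{d'})^2/y}.$$ Consider the problem of maximizing $\min_{d\in\mathcal P,\,d'\in\mathcal U}G_{d,d'}(\psi(d),\psi(d'))$ over $\psi\ge0$ with $\sum_{d\in\mathcal D}\psi(d)=1$. A feasible $\psi$ is optimal only if there exist $z>0$ and a type $\vartheta\in\{0,1\}^{\mathcal P\times\mathcal U}$ with the following properties: - $\max_{\tilde d\in\mathcal P}\vartheta(\tilde d,d')=1$ for all $d'\in\mathcal U$, and $\max_{\tilde d'\in\mathcal U}\vartheta(d,\tilde d')=1$ for all $d\in\mathcal P$; - for each equivalence class $\mathcal D^l$ ($l=1,\dots,L$) of $\overset{\vartheta}{\sim}$, with $\mathcal P^l=\mathcal D^l\cap\mathcal P$ and $\mathcal U^l=\mathcal D^l\cap\mathcal U$, $$\sum_{d\in\mathcal P^l}\Big(\frac{\psi(d)}{\sigma^*_d}\Big)^2=\sum_{d'\in\mathcal U^l}\Big(\frac{\psi(d')}{\sigma^*_{d'}}\Big)^2;$$ - for all $d\in\mathcal P$, $d'\in\mathcal U$ we have $G_{d,d'}(\psi(d),\psi(d'))\ge z$, with equality if and only if $\vartheta(d,d')=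1$.
   Context: Equivalence relation. Given $\vartheta\in\{0,1\}^{\mathcal P\times\mathcal U}$, the relation $\overset{\vartheta}{\sim}$ on $\mathcal D$ is defined by $\tilde d\overset{\vartheta}{\sim}\bar d$ if there is a chain $(d_1,d_1'),\dots,(d_n,d_n')\in\mathcal P\times\mathcal U$ such that: - $\vartheta(d_i,d_i')=1$ for all $i$; - for each $i<n$, either $d_i=d_{i+1}$ or $d_i'=d_{i+1}'$; - $\tilde d\in\{d_1,d_1'\}$ and $\bar d\in\{d_n,d_n'\}$. This relation partitions $\mathcal D$ into equivalence classes $\mathcal D^1,\dots,\mathcal D^L$. *)

theory Defs
  imports Main "HOL.Real"
begin

text \<open>Rate function G_{d,d'}(x,y); for x = 0 or y = 0 we use the limiting value 0
  (the formula has sigma^2/0 = infinity in the denominator).\<close>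
definition Grate :: "('d \<Rightarrow> real) \<Rightarrow> ('d \<Rightarrow> real) \<Rightarrow> 'd \<Rightarrow> 'd \<Rightarrow> real \<Rightarrow> real \<Rightarrow> real" where
  "Grate mu sigma d d' x y =
     (if x = 0 \<or> y = 0 then 0
      else (mu d - mu d')^2 / ((sigma d)^2 / x + (sigma d')^2 / y))"

definition feasible :: "'d set \<Rightarrow> ('d \<Rightarrow> real) \<Rightarrow> bool" where
  "feasible D psi \<longleftrightarrow> (\<forall>d\<in>D. psi d \<ge> 0) \<and> (\<Sum>d\<in>D. psi d) = 1"

definition objective :: "('d \<Rightarrow> real) \<Rightarrow> ('d \<Rightarrow> real) \<Rightarrow> 'd set \<Rightarrow> 'd set \<Rightarrow> ('d \<Rightarrow> real) \<Rightarrow> real" where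
  "objective mu sigma P U psi =
     Min ((\<lambda>(d, d'). Grate mu sigma d d' (psi d) (psi d')) ` (P \<times> U))"

definition optimal :: "('d \<Rightarrow> real) \<Rightarrow> ('d \<Rightarrow> real) \<Rightarrow> 'd set \<Rightarrow> 'd set \<Rightarrow> ('d \<Rightarrow> real) \<Rightarrow> bool" where
  "optimal mu sigma P U psi \<longleftrightarrow> feasible (P \<union> U) psi \<and>
     (\<forall>phi. feasible (P \<union> U) phi \<longrightarrow> objective mu sigma P U phi \<le> objective mu sigma P U psi)"

text \<open>The relation d~ \<bar>d induced by the type theta (chains of pairs in P x U).\<close>
definition theta_rel :: "('d \<Rightarrow> 'd \<Rightarrow> bool) \<Rightarrow> 'd set \<Rightarrow> 'd set \<Rightarrow> 'd \<Rightarrow> 'd \<Rightarrow> bool" where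
  "theta_rel theta P U a b \<longleftrightarrow>
     (\<exists>ch :: ('d \<times> 'd) list. ch \<noteq> [] \<and>
        (\<forall>i<length ch. fst (ch ! i) \<in> P \<and> snd (ch ! i) \<in> U \<and> theta (fst (ch ! i)) (snd (ch ! i))) \<and>
        (\<forall>i. Suc i < length ch \<longrightarrow> fst (ch ! i) = fst (ch ! Suc i) \<or> snd (ch ! i) = snd (ch ! Suc i)) \<and>
        a \<in> {fst (hd ch), snd (hd ch)} \<and> b \<in> {fst (last ch), snd (last ch)})"

definition theta_class :: "('d \<Rightarrow> 'd \<Rightarrow> bool) \<Rightarrow> 'd set \<Rightarrow> 'd set \<Rightarrow> 'd \<Rightarrow> 'd set" where
  "theta_class theta P U d = {e \<in> P \<union> U. theta_rel theta P U d e}"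

end

theory Submission imports Defs Complex_Main begin

lemma perturb:
  fixes P U :: "'d set" and mu sigma psi u :: "'d \<Rightarrow> real" and z :: real
  assumes fin: "finite P" "finite U" and ne: "P \<noteq> {}" "U \<noteq> {}"
    and sig: "\<forall>d\<in>P \<union> U. sigma d > 0" and pos: "\<forall>d\<in>P \<union> U. psi d > 0"
    and mu: "\<forall>d\<in>P. \<forall>d'\<in>U. mu d > mu d'"
    and opt: "optimal mu sigma P U psi"
    and zdef: "z = objective mu sigma P U psi"
    and zle: "\<forall>d\<in>P. \<forall>d'\<in>U. Grate mu sigma d d' (psi d) (psi d') \<ge> z"
    and sum0: "(\<Sum>e\<in>P \<union> U. (psi e / sigma e)^2 * u e) = 0"
    and act: "\<forall>d\<in>P. \<forall>d'\<in>U. Grate mu sigma d d' (psi d) (psi d') = z \<longrightarrow> u d + u d' > 0"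
  shows False
proof -
  define v where "v e = (psi e / sigma e)^2 * u e" for e
  define ps where "ps t e = psi e + t * v e" for t e
  have ev_pos: "\<forall>\<^sub>F t in at_right 0. \<forall>e\<in>P \<union> U. ps t e > 0"
  proof (rule eventually_ball_finite)
    show "finite (P \<union> U)" using fin by simp
    show "\<forall>e\<in>P \<union> U. \<forall>\<^sub>F t in at_right 0. 0 < ps t e"
    proof
      fix e assume e: "e \<in> P \<union> U"
      have "((\<lambda>t. ps t e) \<longlongrightarrow> psi e + 0 * v e) (at_right 0)" unfolding ps_def
        by (intro tendsto_intros)
      then have "((\<lambda>t. ps t e) \<longlongrightarrow> psi e) (at_right 0)" by simp
      then show "\<forall>\<^sub>F t in at_right 0. 0 < ps t e" using pos e by (auto intro: order_tendstoD)
    qed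
  qed
  have ev_t: "\<forall>\<^sub>F t in at_right 0. t > (0::real)" by (rule eventually_at_right_less)
  have ev_pair: "\<forall>d\<in>P. \<forall>d'\<in>U. \<forall>\<^sub>F t in at_right 0. Grate mu sigma d d' (ps t d) (ps t d') > z"
  proof (intro ballI)
    fix d d' assume d: "d \<in> P" and d': "d' \<in> U"
    define D2 where "D2 = (mu d - mu d')^2"
    define a where "a = (sigma d)^2"
    define b where "b = (sigma d')^2"
    define h where "h t = a / ps t d + b / ps t d'" for t
    have D2: "D2 > 0" using mu d d' unfolding D2_def by force
    have pd: "psi d > 0" "psi d' > 0" using pos d d' by auto
    have sd: "sigma d > 0" "sigma d' > 0" using sig d d' by auto
    have ab: "a > 0" "b > 0" using sd unfolding a_def b_def by auto
    have h0: "h 0 = a / psi d + b / psi d'" unfolding h_def ps_def by simp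
    have h0pos: "h 0 > 0" using h0 ab pd by (simp add: add_pos_pos)
    have G0: "Grate mu sigma d d' (psi d) (psi d') = D2 / h 0"
      using pd unfolding Grate_def h0 D2_def a_def b_def by simp
    have eq: "\<forall>\<^sub>F t in at_right 0. Grate mu sigma d d' (ps t d) (ps t d') = D2 / h t \<and> ps t d > 0 \<and> ps t d' > 0"
      using ev_pos
    proof eventually_elim
      case (elim t)
      then have "ps t d > 0" "ps t d' > 0" using d d' by auto
      then show ?case unfolding Grate_def h_def D2_def a_def b_def by simp
    qed
    have ev: "\<forall>\<^sub>F t in at_right 0. D2 / h t > z"
    proof (cases "Grate mu sigma d d' (psi d) (psi d') = z")
      case False
      then have gt: "D2 / h 0 > z" using zle d d' G0 by force
      have "((\<lambda>t. a / ps t d + b / ps t d') \<longlongrightarrow> a / (psi d + 0 * v d) + b / (psi d' + 0 * v d')) (at_right 0)"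
        unfolding ps_def using pd by (intro tendsto_intros) auto
      then have "(h \<longlongrightarrow> h 0) (at_right 0)" unfolding h_def[abs_def] by (simp add: ps_def)
      then have "((\<lambda>t. D2 / h t) \<longlongrightarrow> D2 / h 0) (at_right 0)" using h0pos
        by (intro tendsto_intros) auto
      then show ?thesis using gt by (rule order_tendstoD)
    next
      case True
      then have uu: "u d + u d' > 0" using act d d' by auto
      define k where "k t = a * v d / (psi d * ps t d) + b * v d' / (psi d' * ps t d')" for t
      have "((\<lambda>t. a * v d / (psi d * ps t d) + b * v d' / (psi d' * ps t d')) \<longlongrightarrow>
          a * v d / (psi d * (psi d + 0 * v d)) + b * v d' / (psi d' * (psi d' + 0 * v d'))) (at_right 0)"
        unfolding ps_def using pd by (intro tendsto_intros) auto
      moreover have "a * v d / (psi d * (psi d + 0 * v d)) + b * v d' / (psi d' * (psi d' + 0 * v d')) = u d + u d'"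
        unfolding a_def b_def v_def using pd sd by (simp add: field_simps power2_eq_square)
      ultimately have "(k \<longlongrightarrow> u d + u d') (at_right 0)" unfolding k_def[abs_def] by simp
      then have evk: "\<forall>\<^sub>F t in at_right 0. k t > 0" using uu by (rule order_tendstoD)
      show ?thesis using evk ev_t eq
      proof eventually_elim
        case (elim t)
        then have pt: "ps t d > 0" "ps t d' > 0" by auto
        have dd: "ps t d = psi d + t * v d" "ps t d' = psi d' + t * v d'" unfolding ps_def by auto
        have e1: "a / psi d - a / ps t d = t * (a * v d / (psi d * ps t d))"
          using pt pd by (simp add: field_simps dd(1))
        have e2: "b / psi d' - b / ps t d' = t * (b * v d' / (psi d' * ps t d'))"
          using pt pd by (simp add: field_simps dd(2))
        have "h 0 - h t = t * k t"
          unfolding h0 unfolding h_def k_def using e1 e2 by (simp add: algebra_simps)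
        then have "h t < h 0" using elim by (simp add: algebra_simps)
        moreover have "h t > 0" unfolding h_def using pt ab by (simp add: add_pos_pos)
        ultimately have "D2 / h 0 < D2 / h t" using D2 by (intro divide_strict_left_mono) auto
        then show ?case using True G0 by simp
      qed
    qed
    show "\<forall>\<^sub>F t in at_right 0. Grate mu sigma d d' (ps t d) (ps t d') > z"
      using ev eq by eventually_elim simp
  qed
  have "\<forall>\<^sub>F t in at_right 0. \<forall>d\<in>P. \<forall>d'\<in>U. Grate mu sigma d d' (ps t d) (ps t d') > z"
    using ev_pair fin by (intro eventually_ball_finite ballI) auto
  then have "\<forall>\<^sub>F t in at_right 0. (\<forall>d\<in>P. \<forall>d'\<in>U. Grate mu sigma d d' (ps t d) (ps t d') > z) \<and> (\<forall>e\<in>P \<union> U. ps t e > 0)"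
    using ev_pos by (rule eventually_conj)
  then obtain t where t1: "\<forall>d\<in>P. \<forall>d'\<in>U. Grate mu sigma d d' (ps t d) (ps t d') > z"
      and t2: "\<forall>e\<in>P \<union> U. ps t e > 0"
    using eventually_happens trivial_limit_at_right_real by blast
  have vsum: "(\<Sum>e\<in>P \<union> U. v e) = 0" using sum0 unfolding v_def by simp
  have "(\<Sum>e\<in>P \<union> U. ps t e) = (\<Sum>e\<in>P \<union> U. psi e) + t * (\<Sum>e\<in>P \<union> U. v e)"
    unfolding ps_def by (simp add: sum.distrib sum_distrib_left)
  also have "\<dots> = 1" using opt vsum unfolding optimal_def feasible_def by simp
  finally have feas: "feasible (P \<union> U) (ps t)" unfolding feasible_def using t2 by (auto intro: less_imp_le)
  have "objective mu sigma P U (ps t) > z"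
    unfolding objective_def using fin ne t1 by (subst Min_gr_iff) auto
  moreover have "objective mu sigma P U (ps t) \<le> z"
    using opt feas zdef unfolding optimal_def by auto
  ultimately show False by simp
qed


lemma chain_ext:
  assumes disj: "P \<inter> U = {}" and d1: "d1 \<in> P" and d2: "d2 \<in> U" and th: "theta d1 d2"
  shows "theta_rel theta P U a d1 \<longleftrightarrow> theta_rel theta P U a d2"
proof
  assume "theta_rel theta P U a d1"
  then obtain ch where ne: "ch \<noteq> []"
    and pr: "\<forall>i<length ch. fst (ch ! i) \<in> P \<and> snd (ch ! i) \<in> U \<and> theta (fst (ch ! i)) (snd (ch ! i))"
    and cons: "\<forall>i. Suc i < length ch \<longrightarrow> fst (ch ! i) = fst (ch ! Suc i) \<or> snd (ch ! i) = snd (ch ! Suc i)"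
    and ha: "a \<in> {fst (hd ch), snd (hd ch)}" and lb: "d1 \<in> {fst (last ch), snd (last ch)}"
    unfolding theta_rel_def by blast
  have "snd (last ch) \<in> U" using pr ne by (simp add: last_conv_nth)
  then have fl: "fst (last ch) = d1" using lb d1 disj by auto

  define ch' where "ch' = ch @ [(d1, d2)]"
  have c1: "ch' \<noteq> []" unfolding ch'_def by simp
  have c4: "a \<in> {fst (hd ch'), snd (hd ch')}" using ha ne unfolding ch'_def by simp
  have c5: "d2 \<in> {fst (last ch'), snd (last ch')}" unfolding ch'_def by simp
  have c2: "\<forall>i<length ch'. fst (ch' ! i) \<in> P \<and> snd (ch' ! i) \<in> U \<and> theta (fst (ch' ! i)) (snd (ch' ! i))"
  proof (intro allI impI)
    fix i assume "i < length ch'"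
    then have "i < length ch \<or> i = length ch" unfolding ch'_def by auto
    then show "fst (ch' ! i) \<in> P \<and> snd (ch' ! i) \<in> U \<and> theta (fst (ch' ! i)) (snd (ch' ! i))"
      using pr d1 d2 th unfolding ch'_def by (auto simp: nth_append)
  qed
  have c3: "\<forall>i. Suc i < length ch' \<longrightarrow> fst (ch' ! i) = fst (ch' ! Suc i) \<or> snd (ch' ! i) = snd (ch' ! Suc i)"
  proof (intro allI impI)
    fix i assume i: "Suc i < length ch'"
    then have "Suc i < length ch \<or> Suc i = length ch" unfolding ch'_def by auto
    then show "fst (ch' ! i) = fst (ch' ! Suc i) \<or> snd (ch' ! i) = snd (ch' ! Suc i)"
    proof
      assume "Suc i < length ch" then show ?thesis using cons unfolding ch'_def by (auto simp: nth_append)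
    next
      assume s: "Suc i = length ch"
      then have "i = length ch - 1" by simp
      then have "ch ! i = last ch" using ne by (simp add: last_conv_nth)
      then show ?thesis using s fl unfolding ch'_def by (auto simp: nth_append)
    qed
  qed
  show "theta_rel theta P U a d2" unfolding theta_rel_def using c1 c2 c3 c4 c5 by blast
next
  assume "theta_rel theta P U a d2"
  then obtain ch where ne: "ch \<noteq> []"
    and pr: "\<forall>i<length ch. fst (ch ! i) \<in> P \<and> snd (ch ! i) \<in> U \<and> theta (fst (ch ! i)) (snd (ch ! i))"
    and cons: "\<forall>i. Suc i < length ch \<longrightarrow> fst (ch ! i) = fst (ch ! Suc i) \<or> snd (ch ! i) = snd (ch ! Suc i)"
    and ha: "a \<in> {fst (hd ch), snd (hd ch)}" and lb: "d2 \<in> {fst (last ch), snd (last ch)}"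
    unfolding theta_rel_def by blast
  have "fst (last ch) \<in> P" using pr ne by (simp add: last_conv_nth)
  then have fl: "snd (last ch) = d2" using lb d2 disj by auto

  define ch' where "ch' = ch @ [(d1, d2)]"
  have c1: "ch' \<noteq> []" unfolding ch'_def by simp
  have c4: "a \<in> {fst (hd ch'), snd (hd ch')}" using ha ne unfolding ch'_def by simp
  have c5: "d1 \<in> {fst (last ch'), snd (last ch')}" unfolding ch'_def by simp
  have c2: "\<forall>i<length ch'. fst (ch' ! i) \<in> P \<and> snd (ch' ! i) \<in> U \<and> theta (fst (ch' ! i)) (snd (ch' ! i))"
  proof (intro allI impI)
    fix i assume "i < length ch'"
    then have "i < length ch \<or> i = length ch" unfolding ch'_def by auto
    then show "fst (ch' ! i) \<in> P \<and> snd (ch' ! i) \<in> U \<and> theta (fst (ch' ! i)) (snd (ch' ! i))"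
      using pr d1 d2 th unfolding ch'_def by (auto simp: nth_append)
  qed
  have c3: "\<forall>i. Suc i < length ch' \<longrightarrow> fst (ch' ! i) = fst (ch' ! Suc i) \<or> snd (ch' ! i) = snd (ch' ! Suc i)"
  proof (intro allI impI)
    fix i assume i: "Suc i < length ch'"
    then have "Suc i < length ch \<or> Suc i = length ch" unfolding ch'_def by auto
    then show "fst (ch' ! i) = fst (ch' ! Suc i) \<or> snd (ch' ! i) = snd (ch' ! Suc i)"
    proof
      assume "Suc i < length ch" then show ?thesis using cons unfolding ch'_def by (auto simp: nth_append)
    next
      assume s: "Suc i = length ch"
      then have "i = length ch - 1" by simp
      then have "ch ! i = last ch" using ne by (simp add: last_conv_nth)
      then show ?thesis using s fl unfolding ch'_def by (auto simp: nth_append)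
    qed
  qed
  show "theta_rel theta P U a d1" unfolding theta_rel_def using c1 c2 c3 c4 c5 by blast
qed



theorem proposition6:
  fixes P U :: "'d set" and mu sigma psi :: "'d \<Rightarrow> real"
  assumes "finite P" and "finite U" and "P \<noteq> {}" and "U \<noteq> {}" and "P \<inter> U = {}"
    and "\<forall>d\<in>P \<union> U. sigma d > 0"
    and "inj_on mu (P \<union> U)"
    and "\<forall>d\<in>P. \<forall>d'\<in>U. mu d > mu d'"
    and "optimal mu sigma P U psi"
  shows "\<exists>z::real. z > 0 \<and> (\<exists>theta :: 'd \<Rightarrow> 'd \<Rightarrow> bool.
           (\<forall>d'\<in>U. \<exists>d\<in>P. theta d d') \<and> (\<forall>d\<in>P. \<exists>d'\<in>U. theta d d') \<and>
           (\<forall>d\<in>P \<union> U.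
              (\<Sum>e\<in>theta_class theta P U d \<inter> P. (psi e / sigma e)^2) =
              (\<Sum>e\<in>theta_class theta P U d \<inter> U. (psi e / sigma e)^2)) \<and>
           (\<forall>d\<in>P. \<forall>d'\<in>U. Grate mu sigma d d' (psi d) (psi d') \<ge> z \<and>
              (Grate mu sigma d d' (psi d) (psi d') = z \<longleftrightarrow> theta d d')))"
proof -
  note fin = assms(1,2) and ne = assms(3,4) and disj = assms(5) and sig = assms(6)
    and mu = assms(8) and opt = assms(9)
  define z where "z = objective mu sigma P U psi"
  define Gs where "Gs phi = (\<lambda>(d, d'). Grate mu sigma d d' (phi d) (phi d')) ` (P \<times> U)" for phi
  have Gfin: "finite (Gs phi)" "Gs phi \<noteq> {}" for phi unfolding Gs_def using fin ne by auto
  have zle: "\<forall>d\<in>P. \<forall>d'\<in>U. Grate mu sigma d d' (psi d) (psi d') \<ge> z"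
  proof (intro ballI)
    fix d d' assume "d \<in> P" "d' \<in> U"
    then have "Grate mu sigma d d' (psi d) (psi d') \<in> Gs psi" unfolding Gs_def by force
    then show "Grate mu sigma d d' (psi d) (psi d') \<ge> z"
      unfolding z_def objective_def Gs_def[symmetric] using Gfin by simp
  qed
  have Gpos: "Grate mu sigma d d' x y > 0" if "d \<in> P" "d' \<in> U" "x > 0" "y > 0" for d d' x y
  proof -
    have "(mu d - mu d')^2 > 0" using mu that by force
    moreover have "(sigma d)^2 / x + (sigma d')^2 / y > 0"
      using sig that by (intro add_pos_pos divide_pos_pos) force+
    ultimately show ?thesis unfolding Grate_def using that by simp
  qed
  define phi where "phi = (\<lambda>_::'d. 1 / real (card (P \<union> U)))"
  have cpos: "card (P \<union> U) > 0" using fin ne by (simp add: card_gt_0_iff)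
  have feas: "feasible (P \<union> U) phi" unfolding feasible_def phi_def using cpos by simp
  have "objective mu sigma P U phi > 0"
    unfolding objective_def Gs_def[symmetric]
    using Gfin by (subst Min_gr_iff) (auto simp: Gs_def phi_def cpos intro!: Gpos)
  moreover have "objective mu sigma P U phi \<le> z" using opt feas unfolding optimal_def z_def by auto
  ultimately have zpos: "z > 0" by simp
  have pos: "\<forall>d\<in>P \<union> U. psi d > 0"
  proof
    fix d assume d: "d \<in> P \<union> U"
    have ge: "psi d \<ge> 0" using opt d unfolding optimal_def feasible_def by auto
    show "psi d > 0"
    proof (rule ccontr)
      assume "\<not> psi d > 0"
      then have p0: "psi d = 0" using ge by simp
      show False
      proof (cases "d \<in> P")
        case True
        obtain d' where "d' \<in> U" using ne by auto
        then show False using zle True p0 zpos unfolding Grate_def by force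
      next
        case False
        then have "d \<in> U" using d by auto
        obtain d' where "d' \<in> P" using ne by auto
        then show False using zle \<open>d \<in> U\<close> p0 zpos unfolding Grate_def by force
      qed
    qed
  qed
  define m where "m e = (psi e / sigma e)^2" for e
  have mpos: "\<forall>e\<in>P \<union> U. m e > 0" using pos sig unfolding m_def by force
  define theta where "theta d d' = (Grate mu sigma d d' (psi d) (psi d') = z)" for d d'
  have key: "(\<Sum>e\<in>C \<inter> P. m e) = (\<Sum>e\<in>C \<inter> U. m e)"
    if C: "C \<subseteq> P \<union> U" and cl: "\<forall>d\<in>P. \<forall>d'\<in>U. theta d d' \<longrightarrow> (d \<in> C \<longleftrightarrow> d' \<in> C)" for C
  proof (rule ccontr)
    assume neq: "(\<Sum>e\<in>C \<inter> P. m e) \<noteq> (\<Sum>e\<in>C \<inter> U. m e)"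
    define A where "A = (\<Sum>e\<in>C \<inter> P. m e)"
    define B where "B = (\<Sum>e\<in>C \<inter> U. m e)"
    define M where "M = (\<Sum>e\<in>P \<union> U. m e)"
    obtain e0 where e0: "e0 \<in> P" using ne by auto
    have "m e0 \<le> M" unfolding M_def using e0 fin mpos
      by (intro member_le_sum) (auto intro: less_imp_le)
    then have Mpos: "M > 0" using mpos e0 by force
    define beta where "beta = (A - B)^2 / M"
    have bpos: "beta > 0" unfolding beta_def using neq Mpos A_def B_def by simp
    define u where "u e = beta - (A - B) * (if e \<in> C \<inter> P then 1 else 0) + (A - B) * (if e \<in> C \<inter> U then 1 else 0)" for e
    have finD: "finite (P \<union> U)" using fin by simp
    have s1: "(\<Sum>e\<in>P \<union> U. if e \<in> C \<inter> P then m e else 0) = A"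
    proof -
      have "(\<Sum>e\<in>P \<union> U. if e \<in> C \<inter> P then m e else 0) = (\<Sum>e\<in>{e\<in>P \<union> U. e \<in> C \<inter> P}. m e)"
        using finD by (rule sum.inter_filter[symmetric])
      also have "{e\<in>P \<union> U. e \<in> C \<inter> P} = C \<inter> P" by auto
      finally show ?thesis unfolding A_def .
    qed
    have s2: "(\<Sum>e\<in>P \<union> U. if e \<in> C \<inter> U then m e else 0) = B"
    proof -
      have "(\<Sum>e\<in>P \<union> U. if e \<in> C \<inter> U then m e else 0) = (\<Sum>e\<in>{e\<in>P \<union> U. e \<in> C \<inter> U}. m e)"
        using finD by (rule sum.inter_filter[symmetric])
      also have "{e\<in>P \<union> U. e \<in> C \<inter> U} = C \<inter> U" by auto
      finally show ?thesis unfolding B_def .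
    qed
    have "(\<Sum>e\<in>P \<union> U. m e * u e) = (\<Sum>e\<in>P \<union> U. beta * m e - (A - B) * (if e \<in> C \<inter> P then m e else 0) + (A - B) * (if e \<in> C \<inter> U then m e else 0))"
      unfolding u_def by (intro sum.cong) (auto simp: algebra_simps)
    also have "\<dots> = beta * M - (A - B) * A + (A - B) * B"
      unfolding M_def by (simp add: sum.distrib sum_subtractf sum_distrib_left[symmetric] s1[simplified] s2[simplified])
    also have "\<dots> = 0" unfolding beta_def using Mpos by (simp add: field_simps power2_eq_square)
    finally have sum0: "(\<Sum>e\<in>P \<union> U. (psi e / sigma e)^2 * u e) = 0" unfolding m_def .
    have act: "\<forall>d\<in>P. \<forall>d'\<in>U. Grate mu sigma d d' (psi d) (psi d') = z \<longrightarrow> u d + u d' > 0"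
    proof (intro ballI impI)
      fix d d' assume d: "d \<in> P" and d': "d' \<in> U" and g: "Grate mu sigma d d' (psi d) (psi d') = z"
      then have "d \<in> C \<longleftrightarrow> d' \<in> C" using cl unfolding theta_def by auto
      moreover have "d \<notin> U" "d' \<notin> P" using d d' disj by auto
      ultimately show "u d + u d' > 0" unfolding u_def using d d' bpos by auto
    qed
    show False
      using perturb[OF fin ne sig pos mu opt z_def zle sum0 act] .
  qed
  have cov: False if e: "e \<in> P \<union> U" and no: "\<forall>d\<in>P. \<forall>d'\<in>U. theta d d' \<longrightarrow> d \<noteq> e \<and> d' \<noteq> e" for e
  proof -
    have "(\<Sum>x\<in>{e} \<inter> P. m x) = (\<Sum>x\<in>{e} \<inter> U. m x)"
      using e no by (intro key) auto
    moreover have "m e > 0" using e mpos by blast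
    moreover have "({e} \<inter> P = {e} \<and> {e} \<inter> U = {}) \<or> ({e} \<inter> P = {} \<and> {e} \<inter> U = {e})"
      using disj e by auto
    ultimately show False by (elim disjE conjE) simp_all
  qed
  show ?thesis
  proof (intro exI[of _ z] conjI zpos exI[of _ theta])
    show "\<forall>d'\<in>U. \<exists>d\<in>P. theta d d'"
    proof
      fix e assume e: "e \<in> U"
      show "\<exists>d\<in>P. theta d e"
      proof (rule ccontr)
        assume "\<not> (\<exists>d\<in>P. theta d e)"
        then have "\<forall>d\<in>P. \<forall>d'\<in>U. theta d d' \<longrightarrow> d \<noteq> e \<and> d' \<noteq> e" using e disj by auto
        then show False using cov[of e] e by simp
      qed
    qed
    show "\<forall>d\<in>P. \<exists>d'\<in>U. theta d d'"
    proof
      fix e assume e: "e \<in> P"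
      show "\<exists>d'\<in>U. theta e d'"
      proof (rule ccontr)
        assume "\<not> (\<exists>d'\<in>U. theta e d')"
        then have "\<forall>d\<in>P. \<forall>d'\<in>U. theta d d' \<longrightarrow> d \<noteq> e \<and> d' \<noteq> e" using e disj by auto
        then show False using cov[of e] e by simp
      qed
    qed
    show "\<forall>d\<in>P. \<forall>d'\<in>U. z \<le> Grate mu sigma d d' (psi d) (psi d') \<and>
      (Grate mu sigma d d' (psi d) (psi d') = z) = theta d d'"
      using zle unfolding theta_def by auto
    show "\<forall>d\<in>P \<union> U. (\<Sum>e\<in>theta_class theta P U d \<inter> P. (psi e / sigma e)^2) =
              (\<Sum>e\<in>theta_class theta P U d \<inter> U. (psi e / sigma e)^2)"
    proof
      fix d assume "d \<in> P \<union> U"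
      have "(\<Sum>e\<in>theta_class theta P U d \<inter> P. m e) = (\<Sum>e\<in>theta_class theta P U d \<inter> U. m e)"
      proof (rule key)
        show "theta_class theta P U d \<subseteq> P \<union> U" unfolding theta_class_def by auto
        show "\<forall>d1\<in>P. \<forall>d2\<in>U. theta d1 d2 \<longrightarrow> (d1 \<in> theta_class theta P U d \<longleftrightarrow> d2 \<in> theta_class theta P U d)"
        proof (intro ballI impI)
          fix d1 d2 assume "d1 \<in> P" "d2 \<in> U" "theta d1 d2"
          then have "theta_rel theta P U d d1 \<longleftrightarrow> theta_rel theta P U d d2"
            using chain_ext[OF disj] by blast
          then show "d1 \<in> theta_class theta P U d \<longleftrightarrow> d2 \<in> theta_class theta P U d"
            using \<open>d1 \<in> P\<close> \<open>d2 \<in> U\<close> unfolding theta_class_def by auto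
        qed
      qed
      then show "(\<Sum>e\<in>theta_class theta P U d \<inter> P. (psi e / sigma e)^2) =
              (\<Sum>e\<in>theta_class theta P U d \<inter> U. (psi e / sigma e)^2)" unfolding m_def .
    qed
  qed
qed

end
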